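(* Let $k\ge 3$, let $G_1,\ldots,G_k$ be a finite sequence of pairwise disjoint connected graphs and let $x_i\in V(G_i)$. Let $G$ be the circuit of the graphs $\{G_i\}_{i=1}^k$ with respect to the vertices $\{x_i\}_{i=1}^k$. Then $$SO(G)\geq 2k\sqrt{2}+\sum_{i=1}^{k}SO(G_i),$$ and equality holds if and only if $G_i=K_1$ for every $1\le i\le k$.
   Context: All graphs are finite and simple. For a graph $H$, $SO(H)=\sum_{uv\in E(H)}\sqrt{d_u^2+d_v^2}$, where $d_u$ is the degree of $u$ in $H$ (the Sombor index). The circuit of $G_1,\ldots,G_k$ with respect to $x_1,\ldots,x_k$ is the graph obtained from the disjoint union of $G_1,\ldots,G_k$ and a cycle $C_k$ with vertices $c_1,\ldots,c_k$ in cyclic order, by identifying $x_i$ with $c_i$ for each $i$. *)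

theory Defs
  imports Complex_Main
begin

definition simple_graph :: "'a set \<Rightarrow> 'a set set \<Rightarrow> bool" where
  "simple_graph V E \<longleftrightarrow> finite V \<and>
     (\<forall>e\<in>E. \<exists>u v. e = {u, v} \<and> u \<noteq> v \<and> u \<in> V \<and> v \<in> V)"

definition degree :: "'a set set \<Rightarrow> 'a \<Rightarrow> nat" where
  "degree E v = card {e \<in> E. v \<in> e}"

definition connected_graph :: "'a set \<Rightarrow> 'a set set \<Rightarrow> bool" where
  "connected_graph V E \<longleftrightarrow> V \<noteq> {} \<and>
     (\<forall>u\<in>V. \<forall>v\<in>V. (\<lambda>a b. {a, b} \<in> E)\<^sup>*\<^sup>* u v)"

definition sombor :: "'a set set \<Rightarrow> real" where
  "sombor E = (\<Sum>e\<in>E. sqrt (\<Sum>v\<in>e. (real (degree E v))\<^sup>2))"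

text \<open>Circuit of G_0,...,G_(k-1) w.r.t. x_0,...,x_(k-1): disjoint union plus the
  cycle edges {x_i, x_(i+1 mod k)} (cycle vertex c_i identified with x_i).\<close>
definition circuit_vertices :: "nat \<Rightarrow> (nat \<Rightarrow> 'a set) \<Rightarrow> 'a set" where
  "circuit_vertices k V = (\<Union>i<k. V i)"

definition circuit_edges :: "nat \<Rightarrow> (nat \<Rightarrow> 'a set set) \<Rightarrow> (nat \<Rightarrow> 'a) \<Rightarrow> 'a set set" where
  "circuit_edges k E x = (\<Union>i<k. E i) \<union> {{x i, x ((i + 1) mod k)} | i. i < k}"

end

theory Submission
  imports Defs
begin

lemma sq_aux: "0 \<le> (a::real) \<Longrightarrow> 4 + 4 * a \<le> (a + 2)\<^sup>2"
  by (simp add: power2_eq_square algebra_simps)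

theorem mainTheorem4:
  fixes k :: nat and V :: "nat \<Rightarrow> 'a set" and E :: "nat \<Rightarrow> 'a set set" and x :: "nat \<Rightarrow> 'a"
  assumes "k \<ge> 3"
    and "\<And>i. i < k \<Longrightarrow> simple_graph (V i) (E i)"
    and "\<And>i. i < k \<Longrightarrow> connected_graph (V i) (E i)"
    and "\<And>i j. i < k \<Longrightarrow> j < k \<Longrightarrow> i \<noteq> j \<Longrightarrow> V i \<inter> V j = {}"
    and "\<And>i. i < k \<Longrightarrow> x i \<in> V i"
  shows "sombor (circuit_edges k E x) \<ge> 2 * real k * sqrt 2 + (\<Sum>i<k. sombor (E i)) \<and>
         (sombor (circuit_edges k E x) = 2 * real k * sqrt 2 + (\<Sum>i<k. sombor (E i))
         \<longleftrightarrow> (\<forall>i<k. V i = {x i} \<and> E i = {}))"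
proof -
  note k3 = assms(1) and sg = assms(2) and cg = assms(3) and dj = assms(4) and xV = assms(5)
  define c where "c i = {x i, x ((i + 1) mod k)}" for i
  define U where "U = (\<Union>i<k. E i)"
  define Cy where "Cy = c ` {..<k}"
  define C where "C = circuit_edges k E x"
  have C_eq: "C = U \<union> Cy"
    unfolding C_def circuit_edges_def U_def Cy_def c_def by blast
  have xinj: "i = j" if "i < k" "j < k" "x i = x j" for i j
  proof (rule ccontr)
    assume "i \<noteq> j"
    then have "V i \<inter> V j = {}" using dj that(1,2) by blast
    moreover have "x i \<in> V i" using xV that(1) by blast
    moreover have "x i \<in> V j" using xV[OF that(2)] that(3) by simp
    ultimately show False by blast
  qed
  have Esub: "e \<subseteq> V i \<and> (\<exists>u v. e = {u, v} \<and> u \<noteq> v)" if ik: "i < k" and eE: "e \<in> E i" for i e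
  proof -
    have "\<forall>e\<in>E i. \<exists>u v. e = {u, v} \<and> u \<noteq> v \<and> u \<in> V i \<and> v \<in> V i"
      using sg[OF ik] by (simp add: simple_graph_def)
    then obtain u v where "e = {u, v}" "u \<noteq> v" "u \<in> V i" "v \<in> V i" using eE by blast
    then show ?thesis by blast
  qed
  have finE: "finite (E i)" if "i < k" for i
  proof -
    have "E i \<subseteq> Pow (V i)" using Esub[OF that] by blast
    moreover have "finite (V i)" using sg[OF that] unfolding simple_graph_def by blast
    ultimately show ?thesis by (meson finite_Pow_iff finite_subset)
  qed
  have finU: "finite U" unfolding U_def using finE by auto
  have finCy: "finite Cy" unfolding Cy_def by auto
  have finC: "finite C" using C_eq finU finCy by auto
  have mod_ne: "(i + 1) mod k \<noteq> i" if "i < k" for i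
    using that k3 by (cases "i + 1 < k") (auto simp: mod_if)
  have xne: "x i \<noteq> x ((i + 1) mod k)" if "i < k" for i
    using xinj[of i "(i + 1) mod k"] mod_ne[OF that] that k3 by auto
  have cinj: "inj_on c {..<k}"
  proof (rule inj_onI)
    fix i j assume i: "i \<in> {..<k}" and j: "j \<in> {..<k}" and eq: "c i = c j"
    show "i = j"
    proof (cases "x i = x j")
      case True then show ?thesis using xinj i j by auto
    next
      case False
      then have "x i = x ((j + 1) mod k)" "x ((i + 1) mod k) = x j"
        using eq unfolding c_def by (auto simp: doubleton_eq_iff)
      then have a: "i = (j + 1) mod k" and b: "(i + 1) mod k = j"
        using xinj i j k3 by auto
      then show ?thesis using i j k3
        by (cases "j + 1 < k"; cases "i + 1 < k") (auto simp: mod_if)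
    qed
  qed
  have disjUC: "U \<inter> Cy = {}"
  proof (rule ccontr)
    assume "U \<inter> Cy \<noteq> {}"
    then obtain m i where m: "m < k" and i: "i < k" and e: "c i \<in> E m"
      unfolding U_def Cy_def by auto
    then have "x i \<in> V m" "x ((i + 1) mod k) \<in> V m" using Esub[OF m e] unfolding c_def by auto
    moreover have "(i + 1) mod k < k" using k3 by auto
    ultimately have "m = i" "m = (i + 1) mod k"
      using dj[of m i] dj[of m "(i + 1) mod k"] xV[of i] xV[of "(i + 1) mod k"] i m by blast+
    then show False using mod_ne[OF i] by simp
  qed
  have Edisj: "E i \<inter> E j = {}" if "i < k" "j < k" "i \<noteq> j" for i j
  proof (rule ccontr)
    assume "E i \<inter> E j \<noteq> {}"
    then obtain e where "e \<in> E i" "e \<in> E j" by blast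
    then have "e \<subseteq> V i" "e \<subseteq> V j" "e \<noteq> {}" using Esub that by blast+
    then show False using dj[OF that] by blast
  qed
  define p where "p i = (i + k - 1) mod k" for i
  have p_lt: "p i < k" for i unfolding p_def using k3 by auto
  have p_suc: "(p i + 1) mod k = i" if "i < k" for i
    unfolding p_def using that k3
    by (cases i) (auto simp: mod_if)
  have p_ne: "p i \<noteq> i" if "i < k" for i
    using p_suc[OF that] mod_ne[of "p i"] p_lt[of i] by auto
  have degC: "degree C (x i) = degree (E i) (x i) + 2" if i: "i < k" for i
  proof -
    have seteq: "{e \<in> C. x i \<in> e} = {e \<in> E i. x i \<in> e} \<union> {c i, c (p i)}"
    proof (intro equalityI subsetI)
      fix e assume "e \<in> {e \<in> C. x i \<in> e}"
      then have eC: "e \<in> C" and xe: "x i \<in> e" by auto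
      show "e \<in> {e \<in> E i. x i \<in> e} \<union> {c i, c (p i)}"
      proof (cases "e \<in> U")
        case True
        then obtain m where m: "m < k" "e \<in> E m" unfolding U_def by auto
        then have "x i \<in> V m" using Esub xe by blast
        then have "m = i" using dj[of m i] xV[OF i] m i by blast
        then show ?thesis using m xe by auto
      next
        case False
        then obtain j where j: "j < k" "e = c j" using eC C_eq unfolding Cy_def by auto
        then have "x i = x j \<or> x i = x ((j + 1) mod k)" using xe unfolding c_def by auto
        then have "i = j \<or> i = (j + 1) mod k" using xinj i j k3 by auto
        moreover have "j = p i" if "i = (j + 1) mod k"
          using that j(1) k3 unfolding p_def
          by (cases "j + 1 < k") (auto simp: mod_if)
        ultimately show ?thesis using j by auto
      qed
    next
      fix e assume "e \<in> {e \<in> E i. x i \<in> e} \<union> {c i, c (p i)}"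
      then show "e \<in> {e \<in> C. x i \<in> e}"
        using C_eq i p_lt[of i] p_suc[OF i] unfolding U_def Cy_def c_def by auto
    qed
    have cne: "c i \<noteq> c (p i)" using cinj p_ne[OF i] p_lt[of i] i unfolding inj_on_def by blast
    have d: "{e \<in> E i. x i \<in> e} \<inter> {c i, c (p i)} = {}"
      using disjUC i p_lt[of i] unfolding U_def Cy_def by auto
    have "card ({e \<in> E i. x i \<in> e} \<union> {c i, c (p i)}) = card {e \<in> E i. x i \<in> e} + card {c i, c (p i)}"
      by (rule card_Un_disjoint) (use finE[OF i] d in auto)
    then show ?thesis unfolding degree_def seteq using cne by simp
  qed
  have degmono: "degree (E i) v \<le> degree C v" if "i < k" for i v
  proof -
    have "{e \<in> E i. v \<in> e} \<subseteq> {e \<in> C. v \<in> e}" using C_eq that unfolding U_def by auto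
    then show ?thesis unfolding degree_def using finC by (simp add: card_mono)
  qed
  define f where "f e = sqrt (\<Sum>v\<in>e. (real (degree C v))\<^sup>2)" for e
  define g where "g i = f (c i)" for i
  define a where "a = (\<Sum>i<k. \<Sum>e\<in>E i. f e)"
  define b where "b = (\<Sum>i<k. g i)"
  define s where "s = (\<Sum>i<k. sombor (E i))"
  have split: "sombor C = a + b"
  proof -
    have "sombor C = sum f C" unfolding sombor_def f_def by simp
    also have "\<dots> = sum f U + sum f Cy"
      unfolding C_eq by (rule sum.union_disjoint) (use finU finCy disjUC in auto)
    finally have "sombor C = sum f U + sum f Cy" .
    moreover have "sum f U = a" unfolding U_def a_def
      by (rule sum.UNION_disjoint) (use finE Edisj in auto)
    moreover have "sum f Cy = b" unfolding Cy_def b_def g_def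
      by (rule sum.reindex[OF cinj, unfolded comp_def])
    ultimately show ?thesis by simp
  qed
  have a_ge: "a \<ge> s"
    unfolding a_def s_def sombor_def
  proof (rule sum_mono, rule sum_mono)
    fix i e assume i: "i \<in> {..<k}" and e: "e \<in> E i"
    show "sqrt (\<Sum>v\<in>e. (real (degree (E i) v))\<^sup>2) \<le> f e"
      unfolding f_def
      by (rule real_sqrt_le_mono, rule sum_mono) (use degmono i in auto)
  qed
  have g_eq: "g i = sqrt ((real (degree (E i) (x i)) + 2)\<^sup>2 + (real (degree (E ((i + 1) mod k)) (x ((i + 1) mod k))) + 2)\<^sup>2)"
    if i: "i < k" for i
  proof -
    have i1: "(i + 1) mod k < k" using k3 by auto
    show ?thesis unfolding g_def f_def c_def using xne[OF i] degC[OF i] degC[OF i1] by (simp add: add.commute)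
  qed
  have s8: "sqrt 8 = 2 * sqrt 2"
  proof -
    have "sqrt 8 = sqrt (2\<^sup>2 * 2)" by simp
    also have "\<dots> = 2 * sqrt 2" by (simp only: real_sqrt_mult real_sqrt_abs)
    finally show ?thesis .
  qed
  have g_ge: "g i \<ge> 2 * sqrt 2" if i: "i < k" for i
  proof -
    have "sqrt 8 \<le> g i" unfolding g_eq[OF i]
      by (rule real_sqrt_le_mono) (use sq_aux[of "real (degree (E i) (x i))"] sq_aux[of "real (degree (E ((i + 1) mod k)) (x ((i + 1) mod k)))"] in simp)
    then show ?thesis using s8 by simp
  qed
  have b_ge: "b \<ge> real k * (2 * sqrt 2)"
    unfolding b_def using sum_mono[of "{..<k}" "\<lambda>_. 2 * sqrt 2" g] g_ge by simp
  have part1: "sombor C \<ge> 2 * real k * sqrt 2 + s" using split a_ge b_ge by simp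
  have part2: "sombor C = 2 * real k * sqrt 2 + s \<longleftrightarrow> (\<forall>i<k. V i = {x i} \<and> E i = {})"
  proof
    assume eq: "sombor C = 2 * real k * sqrt 2 + s"
    then have beq: "b = (\<Sum>i<k. 2 * sqrt 2)" using split a_ge b_ge by simp
    have gi: "g i = 2 * sqrt 2" if i: "i < k" for i
    proof (rule ccontr)
      assume "g i \<noteq> 2 * sqrt 2"
      then have "g i > 2 * sqrt 2" using g_ge[OF i] by simp
      then have "(\<Sum>i<k. 2 * sqrt 2) < b" unfolding b_def
        by (intro sum_strict_mono_ex1) (use g_ge i in auto)
      then show False using beq by simp
    qed
    show "\<forall>i<k. V i = {x i} \<and> E i = {}"
    proof (intro allI impI)
      fix i assume i: "i < k"
      have i1: "(i + 1) mod k < k" using k3 by auto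
      define d1 where "d1 = real (degree (E i) (x i))"
      define d2 where "d2 = real (degree (E ((i + 1) mod k)) (x ((i + 1) mod k)))"
      have "sqrt ((d1 + 2)\<^sup>2 + (d2 + 2)\<^sup>2) = sqrt 8"
        using gi[OF i] g_eq[OF i] s8 unfolding d1_def d2_def by simp
      then have "(d1 + 2)\<^sup>2 + (d2 + 2)\<^sup>2 = 8" by simp
      moreover have "d1 \<ge> 0" "d2 \<ge> 0" unfolding d1_def d2_def by auto
      ultimately have "d1 = 0" using sq_aux[of d1] sq_aux[of d2] by linarith
      then have deg0: "degree (E i) (x i) = 0" unfolding d1_def by simp
      have noedge: "x i \<notin> e" if "e \<in> E i" for e
      proof -
        have "{e \<in> E i. x i \<in> e} = {}" using deg0 finE[OF i] unfolding degree_def by simp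
        then show ?thesis using that by blast
      qed
      have "V i = {x i}"
      proof (intro equalityI subsetI)
        fix v assume v: "v \<in> V i"
        have "(\<lambda>a b. {a, b} \<in> E i)\<^sup>*\<^sup>* (x i) v"
          using cg[OF i] v xV[OF i] unfolding connected_graph_def by blast
        then show "v \<in> {x i}"
        proof (cases rule: converse_rtranclpE)
          case base then show ?thesis by simp
        next
          case (step y) then show ?thesis using noedge by blast
        qed
      qed (use xV[OF i] in auto)
      moreover have "E i = {}"
      proof (rule ccontr)
        assume "E i \<noteq> {}"
        then obtain e where "e \<in> E i" by blast
        then have "e \<subseteq> {x i}" "\<exists>u v. e = {u, v} \<and> u \<noteq> v"
          using Esub[OF i] \<open>V i = {x i}\<close> by simp_all
        then show False by auto
      qed
      ultimately show "V i = {x i} \<and> E i = {}" by simp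
    qed
  next
    assume H: "\<forall>i<k. V i = {x i} \<and> E i = {}"
    have "a = 0" unfolding a_def by (rule sum.neutral) (use H in simp)
    moreover have "s = 0" unfolding s_def sombor_def by (rule sum.neutral) (use H in simp)
    moreover have "b = (\<Sum>i<k. 2 * sqrt 2)"
      unfolding b_def
    proof (rule sum.cong)
      fix i assume i: "i \<in> {..<k}"
      have i1: "(i + 1) mod k < k" using k3 by auto
      have "E i = {}" "E ((i + 1) mod k) = {}" using H i i1 by auto
      then have "g i = sqrt 8" using g_eq[of i] i by (simp add: degree_def)
      then show "g i = 2 * sqrt 2" using s8 by simp
    qed simp
    ultimately show "sombor C = 2 * real k * sqrt 2 + s" using split by simp
  qed
  show ?thesis using part1 part2 unfolding C_def s_def by simp
qed

end
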